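(* Let $\square$ be a subcomplex of $I^n$, and let $S^k$ be a subcomplex of $\square$ isomorphic to $\partial I^{k+1}$, with $k\geq 1$. Then $S^k$ is a face-like subcomplex of $\square$ if and only if $S^k$ is not the boundary of a $(k+1)$-dimensional face of $\square$, i.e. $S^k\neq\partial\hat F$ for every $F\in\square$.
   Context: A cubical complex consists of a finite vertex set $V$ and a collection $\square$ of nonempty subsets of $V$ (faces) such that: every singleton is a face; for each face $F$ the poset $\hat F=\{G\in\square : G\subseteq F\}$ is isomorphic to the poset of nonempty faces of a cube (of dimension $\dim F$); and the intersection of two faces is empty or a face. $I^n$ is the $n$-cube as a cubical complex: vertex set $\{0,1\}^n$, faces indexed by $\{0,1,*\}^n$ (the face $(p_i)$ is the set of $x$ with $x_i=p_i$ whenever $p_i\ne *$). $\partial I^{m}$ is $I^m$ with the top face $( *,\dots,* )$ removed; for a face $F$, $\partial\hat F=\hat F\setminus\{F\}$. A subcomplex is a subset of vertices and faces forming a cubical complex; isomorphism means a vertex bijection mapping faces to faces in both directions. A subcomplex $\Gamma$ of $\square$ is face-like if for every face $F\in\square$, $F\cap V(\Gamma)$ is empty or a face of $\Gamma$. *)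

theory Defs
  imports Main
begin

text \<open>Vertices of the cube I^n: boolean lists of length n.
  A face is indexed by p :: bool option list (None plays the role of *).\<close>

definition cube_vertices :: "nat \<Rightarrow> bool list set" where
  "cube_vertices n = {x. length x = n}"

definition cube_face :: "bool option list \<Rightarrow> bool list set" where
  "cube_face p = {x. length x = length p \<and> (\<forall>i<length p. p ! i \<noteq> None \<longrightarrow> x ! i = the (p ! i))}"

definition cube_faces :: "nat \<Rightarrow> bool list set set" where
  "cube_faces n = cube_face ` {p. length p = n}"

definition bd_cube_faces :: "nat \<Rightarrow> bool list set set" where
  "bd_cube_faces m = cube_faces m - {cube_face (replicate m None)}"

definition poset_iso :: "'a set set \<Rightarrow> 'b set set \<Rightarrow> bool" where
  "poset_iso A B \<longleftrightarrow> (\<exists>f. bij_betw f A B \<and> (\<forall>G\<in>A. \<forall>H\<in>A. G \<subseteq> H \<longleftrightarrow> f G \<subseteq> f H))"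

definition faces_below :: "'a set set \<Rightarrow> 'a set \<Rightarrow> 'a set set" where
  "faces_below C F = {G \<in> C. G \<subseteq> F}"

definition bd_faces_below :: "'a set set \<Rightarrow> 'a set \<Rightarrow> 'a set set" where
  "bd_faces_below C F = faces_below C F - {F}"

definition cubical_complex :: "'a set \<Rightarrow> 'a set set \<Rightarrow> bool" where
  "cubical_complex V C \<longleftrightarrow>
     finite V \<and> (\<forall>F\<in>C. F \<noteq> {} \<and> F \<subseteq> V) \<and>
     (\<forall>v\<in>V. {v} \<in> C) \<and>
     (\<forall>F\<in>C. \<exists>m. poset_iso (faces_below C F) (cube_faces m)) \<and>
     (\<forall>F\<in>C. \<forall>G\<in>C. F \<inter> G = {} \<or> F \<inter> G \<in> C)"

definition subcomplex :: "'a set \<Rightarrow> 'a set set \<Rightarrow> 'a set \<Rightarrow> 'a set set \<Rightarrow> bool" where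
  "subcomplex V' C' V C \<longleftrightarrow> V' \<subseteq> V \<and> C' \<subseteq> C \<and> cubical_complex V' C'"

definition complex_iso :: "'a set \<Rightarrow> 'a set set \<Rightarrow> 'b set \<Rightarrow> 'b set set \<Rightarrow> bool" where
  "complex_iso V C W D \<longleftrightarrow>
     (\<exists>\<phi>. bij_betw \<phi> V W \<and> (\<forall>F. F \<subseteq> V \<longrightarrow> (F \<in> C \<longleftrightarrow> \<phi> ` F \<in> D)))"

definition face_like :: "'a set \<Rightarrow> 'a set set \<Rightarrow> 'a set \<Rightarrow> 'a set set \<Rightarrow> bool" where
  "face_like V' C' V C \<longleftrightarrow> subcomplex V' C' V C \<and>
     (\<forall>F\<in>C. F \<inter> V' = {} \<or> F \<inter> V' \<in> C')"

end

theory Submission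
  imports Defs
begin


definition flip :: "bool list \<Rightarrow> nat \<Rightarrow> bool list" where
  "flip x a = x[a := \<not> x ! a]"

lemma length_flip[simp]: "length (flip x a) = length x"
  by (simp add: flip_def)

lemma nth_flip: "a < length x \<Longrightarrow> flip x a ! j = (if j = a then \<not> x ! a else x ! j)"
  by (simp add: flip_def nth_list_update)

lemma flip_flip[simp]: "a < length x \<Longrightarrow> flip (flip x a) a = x"
  by (rule nth_equalityI) (auto simp: nth_flip)

lemma flip_neq: "a < length x \<Longrightarrow> flip x a \<noteq> x"
  by (metis nth_flip)

lemma flip_comm: "a < length x \<Longrightarrow> b < length x \<Longrightarrow> flip (flip x a) b = flip (flip x b) a"
  by (rule nth_equalityI) (auto simp: nth_flip)

lemma flip_inj: "a < length x \<Longrightarrow> b < length x \<Longrightarrow> flip x a = flip x b \<Longrightarrow> a = b"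
  by (metis nth_flip)

lemma flip_square:
  assumes "a < length x" "b < length x" "c < length x" "d < length x" "a \<noteq> b" "a \<noteq> c"
    and e: "flip (flip x a) b = flip (flip x c) d"
  shows "d = a \<and> b = c"
proof -
  have "flip (flip x a) b ! a = flip (flip x c) d ! a" using e by simp
  moreover have "flip (flip x a) b ! a = (\<not> x ! a)" using assms(1,2,5) by (simp add: nth_flip)
  moreover have "flip (flip x c) d ! a = (if a = d then \<not> x ! a else x ! a)"
    using assms(1-4,6) by (simp add: nth_flip)
  ultimately have "d = a" by (cases "a = d") auto
  have "flip (flip x a) b ! b = flip (flip x c) d ! b" using e by simp
  moreover have "flip (flip x a) b ! b = (\<not> x ! b)" using assms(1,2,5) by (simp add: nth_flip)
  moreover have "flip (flip x c) d ! b = (if b = c then \<not> x ! b else x ! b)"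
    using assms(1-6) \<open>d = a\<close> by (simp add: nth_flip)
  ultimately have "b = c" by (cases "b = c") auto
  with \<open>d = a\<close> show ?thesis by simp
qed

lemma flip_twice_eq: "a < length x \<Longrightarrow> a' < length x \<Longrightarrow> flip (flip x a) a' = x \<Longrightarrow> a' = a"
  by (metis flip_flip flip_inj length_flip)

definition nNone :: "bool option list \<Rightarrow> nat" where
  "nNone p = length (filter (\<lambda>ob. ob = None) p)"

lemma nNone_simps[simp]: "nNone [] = 0" "nNone (ob # p) = (if ob = None then Suc (nNone p) else nNone p)"
  by (auto simp: nNone_def)

lemma nNone_card: "nNone p = card {i. i < length p \<and> p ! i = None}"
  by (simp add: nNone_def length_filter_conv_card)

definition compat :: "bool option list \<Rightarrow> bool option list set" where
  "compat p = {q. length q = length p \<and> (\<forall>i<length p. p ! i \<noteq> None \<longrightarrow> q ! i = p ! i)}"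

lemma cube_face_Nil: "cube_face [] = {[]}"
  by (auto simp: cube_face_def)

lemma cube_face_Cons: "cube_face (ob # p) = (\<lambda>(c, x). c # x) ` ({c. ob \<noteq> None \<longrightarrow> c = the ob} \<times> cube_face p)"
proof (rule set_eqI)
  fix y
  show "y \<in> cube_face (ob # p) \<longleftrightarrow> y \<in> (\<lambda>(c, x). c # x) ` ({c. ob \<noteq> None \<longrightarrow> c = the ob} \<times> cube_face p)"
  proof (cases y)
    case Nil then show ?thesis by (auto simp: cube_face_def)
  next
    case (Cons c x) then show ?thesis by (auto simp: cube_face_def All_less_Suc2)
  qed
qed

lemma compat_Nil: "compat [] = {[]}"
  by (auto simp: compat_def)

lemma compat_Cons: "compat (ob # p) = (\<lambda>(c, x). c # x) ` ({c. ob \<noteq> None \<longrightarrow> c = ob} \<times> compat p)"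
proof (rule set_eqI)
  fix y
  show "y \<in> compat (ob # p) \<longleftrightarrow> y \<in> (\<lambda>(c, x). c # x) ` ({c. ob \<noteq> None \<longrightarrow> c = ob} \<times> compat p)"
  proof (cases y)
    case Nil then show ?thesis by (auto simp: compat_def)
  next
    case (Cons c x) then show ?thesis by (auto simp: compat_def All_less_Suc2)
  qed
qed

lemma inj_Cons_pair: "inj_on (\<lambda>(c, x). c # x) A"
  by (auto simp: inj_on_def)

lemma card_opt_None: "card (UNIV :: bool option set) = 3"
proof -
  have "(UNIV :: bool option set) = {None, Some True, Some False}"
    by (auto intro: option.exhaust)
  moreover have "card {None, Some True, Some (False::bool)} = 3" by simp
  ultimately show ?thesis by metis
qed

lemma finite_cube_face: "finite (cube_face p)"
  by (induction p) (auto simp: cube_face_Nil cube_face_Cons)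

lemma card_cube_face: "card (cube_face p) = 2 ^ nNone p"
proof (induction p)
  case Nil then show ?case by (simp add: cube_face_Nil)
next
  case (Cons ob p)
  have "card (cube_face (ob # p)) = card ({c. ob \<noteq> None \<longrightarrow> c = the ob} \<times> cube_face p)"
    unfolding cube_face_Cons by (rule card_image[OF inj_Cons_pair])
  also have "\<dots> = card {c. ob \<noteq> None \<longrightarrow> c = the ob} * card (cube_face p)"
    by (rule card_cartesian_product)
  also have "card {c. ob \<noteq> None \<longrightarrow> c = the ob} = (if ob = None then 2 else 1)"
    by (cases ob) auto
  finally show ?case using Cons by simp
qed

lemma finite_compat: "finite (compat p)"
  by (induction p) (auto simp: compat_Nil compat_Cons)

lemma card_compat: "card (compat p) = 3 ^ nNone p"
proof (induction p)
  case Nil then show ?case by (simp add: compat_Nil)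
next
  case (Cons ob p)
  have "card (compat (ob # p)) = card ({c. ob \<noteq> None \<longrightarrow> c = ob} \<times> compat p)"
    unfolding compat_Cons by (rule card_image[OF inj_Cons_pair])
  also have "\<dots> = card {c. ob \<noteq> None \<longrightarrow> c = ob} * card (compat p)"
    by (rule card_cartesian_product)
  also have "card {c. ob \<noteq> None \<longrightarrow> c = ob} = (if ob = None then 3 else 1)"
    using card_opt_None by (cases ob) auto
  finally show ?case using Cons by simp
qed



lemma cube_face_len: "x \<in> cube_face p \<Longrightarrow> length x = length p"
  by (simp add: cube_face_def)

lemma cube_face_subset_iff:
  assumes "length q = length p"
  shows "cube_face q \<subseteq> cube_face p \<longleftrightarrow> q \<in> compat p"
proof
  assume sub: "cube_face q \<subseteq> cube_face p"
  show "q \<in> compat p" unfolding compat_def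
  proof (safe)
    show "length q = length p" by fact
    fix i y assume i: "i < length p" and py: "p ! i = Some y"
    show "q ! i = p ! i"
    proof (rule ccontr)
      assume ne: "q ! i \<noteq> p ! i"
      define x where "x = map (\<lambda>ob. case ob of None \<Rightarrow> \<not> y | Some c \<Rightarrow> c) q"
      have "x \<in> cube_face q" by (auto simp: x_def cube_face_def)
      hence "x \<in> cube_face p" using sub by blast
      hence "x ! i = y" using i py by (auto simp: cube_face_def)
      moreover have "x ! i \<noteq> y" using ne py i assms by (cases "q ! i") (auto simp: x_def)
      ultimately show False by simp
    qed
  qed
next
  assume qc: "q \<in> compat p"
  show "cube_face q \<subseteq> cube_face p"
  proof
    fix x assume x: "x \<in> cube_face q"
    have lx: "length x = length p" using x assms by (simp add: cube_face_def)
    have xq: "\<And>i. i < length p \<Longrightarrow> q ! i \<noteq> None \<Longrightarrow> x ! i = the (q ! i)"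
      using x assms by (simp add: cube_face_def)
    have qp: "\<And>i. i < length p \<Longrightarrow> p ! i \<noteq> None \<Longrightarrow> q ! i = p ! i"
      using qc by (simp add: compat_def)
    show "x \<in> cube_face p" unfolding cube_face_def
    proof (intro CollectI conjI allI impI)
      show "length x = length p" by fact
      fix i assume i: "i < length p" "p ! i \<noteq> None"
      thus "x ! i = the (p ! i)" using xq[of i] qp[of i] by simp
    qed
  qed
qed

lemma cube_face_inj:
  assumes "length q = length p" "cube_face q = cube_face p"
  shows "q = p"
proof -
  have "q \<in> compat p" using cube_face_subset_iff assms by auto
  hence a: "\<And>i. i < length p \<Longrightarrow> p ! i \<noteq> None \<Longrightarrow> q ! i = p ! i" by (simp add: compat_def)
  have "p \<in> compat q" using cube_face_subset_iff[of p q] assms by auto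
  hence b: "\<And>i. i < length q \<Longrightarrow> q ! i \<noteq> None \<Longrightarrow> p ! i = q ! i" by (simp add: compat_def)
  show ?thesis
  proof (rule nth_equalityI)
    show "length q = length p" by fact
    fix i assume i: "i < length q"
    show "q ! i = p ! i"
    proof (cases "p ! i = None")
      case True
      thus ?thesis using b[OF i] by (cases "q ! i = None") auto
    next
      case False thus ?thesis using a[of i] i assms(1) by simp
    qed
  qed
qed

lemma subcubes_eq:
  assumes "length p = n"
  shows "{H \<in> cube_faces n. H \<subseteq> cube_face p} = cube_face ` compat p"
proof -
  have "\<And>q. q \<in> compat p \<Longrightarrow> length q = n" using assms by (auto simp: compat_def)
  thus ?thesis using assms cube_face_subset_iff unfolding cube_faces_def by auto
qed

lemma card_subcubes:
  assumes "length p = n"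
  shows "card {H \<in> cube_faces n. H \<subseteq> cube_face p} = 3 ^ nNone p"
proof -
  have "inj_on cube_face (compat p)"
    by (rule inj_onI) (auto simp: compat_def intro: cube_face_inj)
  thus ?thesis using subcubes_eq[OF assms] card_image card_compat by metis
qed

lemma finite_subcubes:
  assumes "length p = n"
  shows "finite {H \<in> cube_faces n. H \<subseteq> cube_face p}"
  using subcubes_eq[OF assms] finite_compat by simp

lemma cube_vertices_eq: "cube_vertices m = cube_face (replicate m None)"
  by (auto simp: cube_vertices_def cube_face_def)

lemma nNone_replicate[simp]: "nNone (replicate m None) = m"
  by (induction m) auto

lemma card_cube_faces: "card (cube_faces m) = 3 ^ m"
proof -
  have "cube_faces m = {H \<in> cube_faces m. H \<subseteq> cube_face (replicate m None)}"
    by (auto simp: cube_faces_def cube_face_def)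
  thus ?thesis using card_subcubes[of "replicate m None" m] by simp
qed

lemma finite_cube_faces: "finite (cube_faces m)"
proof -
  have "finite {p::bool option list. length p = m}"
    using finite_compat[of "replicate m None"] by (simp add: compat_def)
  thus ?thesis by (simp add: cube_faces_def)
qed

lemma top_in_cube_faces: "cube_face (replicate m None) \<in> cube_faces m"
  by (simp add: cube_faces_def)

lemma cube_face_inter:
  assumes len: "length q = length p" "length r = length p"
    and rn: "\<And>i. i < length p \<Longrightarrow> r ! i = (if q ! i = None then p ! i else q ! i)"
    and x: "x \<in> cube_face q \<inter> cube_face p"
  shows "cube_face q \<inter> cube_face p = cube_face r"
proof -
  have xq: "\<And>i. i<length p \<Longrightarrow> q ! i \<noteq> None \<Longrightarrow> x ! i = the (q ! i)"
   and xp: "\<And>i. i<length p \<Longrightarrow> p ! i \<noteq> None \<Longrightarrow> x ! i = the (p ! i)"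
    using x len by (auto simp: cube_face_def)
  have A: "y \<in> cube_face r" if y: "y \<in> cube_face q \<inter> cube_face p" for y
  proof -
    have yq: "\<And>i. i<length p \<Longrightarrow> q ! i \<noteq> None \<Longrightarrow> y ! i = the (q ! i)"
     and yp: "\<And>i. i<length p \<Longrightarrow> p ! i \<noteq> None \<Longrightarrow> y ! i = the (p ! i)"
     and ly: "length y = length p"
      using y len by (auto simp: cube_face_def)
    show "y \<in> cube_face r" unfolding cube_face_def
    proof (intro CollectI conjI allI impI)
      show "length y = length r" using ly len by simp
      fix i assume i: "i < length r" and rz: "r ! i \<noteq> None"
      show "y ! i = the (r ! i)"
      proof (cases "q ! i = None")
        case True thus ?thesis using rn[of i] i len rz yp[of i] by force
      next
        case False thus ?thesis using rn[of i] i len rz yq[of i] by force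
      qed
    qed
  qed
  have B: "y \<in> cube_face q \<inter> cube_face p" if y: "y \<in> cube_face r" for y
  proof -
    have yr: "\<And>i. i<length p \<Longrightarrow> r ! i \<noteq> None \<Longrightarrow> y ! i = the (r ! i)"
     and ly: "length y = length p"
      using y len by (auto simp: cube_face_def)
    have "y \<in> cube_face q" unfolding cube_face_def
    proof (intro CollectI conjI allI impI)
      show "length y = length q" using ly len by simp
      fix i assume i: "i < length q" and qz: "q ! i \<noteq> None"
      show "y ! i = the (q ! i)" using rn[of i] yr[of i] i len qz by simp
    qed
    moreover have "y \<in> cube_face p" unfolding cube_face_def
    proof (intro CollectI conjI allI impI)
      show "length y = length p" using ly by simp
      fix i assume i: "i < length p" and pz: "p ! i \<noteq> None"
      show "y ! i = the (p ! i)"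
      proof (cases "q ! i = None")
        case True thus ?thesis using rn[of i] yr[of i] i pz by simp
      next
        case False
        hence "y ! i = the (q ! i)" using rn[of i] yr[of i] i by force
        also have "\<dots> = x ! i" using xq[of i] i False by simp
        also have "\<dots> = the (p ! i)" using xp[of i] i pz by simp
        finally show ?thesis by simp
      qed
    qed
    ultimately show "y \<in> cube_face q \<inter> cube_face p" by blast
  qed
  from A B show ?thesis by blast
qed

lemma two_point:
  assumes "cube_face q = {x, y}" "x \<noteq> y"
  shows "\<exists>a<length q. y = flip x a"
proof -
  have xq: "x \<in> cube_face q" and yq: "y \<in> cube_face q" using assms by auto
  hence lx: "length x = length q" and ly: "length y = length q" by (auto simp: cube_face_def)
  obtain a where a: "a < length q" "x ! a \<noteq> y ! a"
    using assms(2) lx ly nth_equalityI[of x y] by auto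
  have qa: "q ! a = None"
  proof (rule ccontr)
    assume "q ! a \<noteq> None"
    hence "x ! a = the (q ! a)" "y ! a = the (q ! a)" using xq yq a by (auto simp: cube_face_def)
    thus False using a by simp
  qed
  have "flip x a \<in> cube_face q" using xq qa a lx
    by (auto simp: cube_face_def nth_flip)
  moreover have "flip x a \<noteq> x" using a lx flip_neq by simp
  ultimately have "flip x a = y" using assms(1) by auto
  thus ?thesis using a by auto
qed

definition minimals :: "'a set set \<Rightarrow> 'a set set" where
  "minimals A = {M \<in> A. \<forall>N\<in>A. N \<subseteq> M \<longrightarrow> N = M}"

lemma poset_iso_minimals:
  assumes "poset_iso A B"
  shows "card (minimals A) = card (minimals B)"
proof -
  obtain f where bij: "bij_betw f A B" and mono: "\<forall>G\<in>A. \<forall>H\<in>A. G \<subseteq> H \<longleftrightarrow> f G \<subseteq> f H"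
    using assms by (auto simp: poset_iso_def)
  have "f ` minimals A = minimals B"
  proof
    show "f ` minimals A \<subseteq> minimals B"
    proof
      fix y assume "y \<in> f ` minimals A"
      then obtain M where M: "M \<in> minimals A" "y = f M" by blast
      have MA: "M \<in> A" using M by (simp add: minimals_def)
      have "\<forall>N\<in>B. N \<subseteq> y \<longrightarrow> N = y"
      proof (intro ballI impI)
        fix N assume NB: "N \<in> B" "N \<subseteq> y"
        then obtain N' where N': "N' \<in> A" "N = f N'" using bij by (auto simp: bij_betw_def)
        hence "N' \<subseteq> M" using mono MA M NB by auto
        hence "N' = M" using M N' by (auto simp: minimals_def)
        thus "N = y" using N' M by simp
      qed
      moreover have "y \<in> B" using MA M bij by (auto simp: bij_betw_def)
      ultimately show "y \<in> minimals B" by (simp add: minimals_def)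
    qed
  next
    show "minimals B \<subseteq> f ` minimals A"
    proof
      fix y assume y: "y \<in> minimals B"
      then obtain M where M: "M \<in> A" "y = f M" using bij by (auto simp: bij_betw_def minimals_def)
      have "\<forall>N\<in>A. N \<subseteq> M \<longrightarrow> N = M"
      proof (intro ballI impI)
        fix N assume N: "N \<in> A" "N \<subseteq> M"
        hence "f N \<subseteq> f M" using mono M by auto
        moreover have "f N \<in> B" using N bij by (auto simp: bij_betw_def)
        ultimately have "f N = f M" using y M by (auto simp: minimals_def)
        thus "N = M" using bij N M by (auto simp: bij_betw_def inj_on_def)
      qed
      thus "y \<in> f ` minimals A" using M by (auto simp: minimals_def)
    qed
  qed
  moreover have "inj_on f (minimals A)" using bij by (auto simp: bij_betw_def minimals_def inj_on_def)
  ultimately show ?thesis using card_image by metis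
qed

lemma minimals_singletons:
  assumes "\<forall>M\<in>A. M \<noteq> {} \<and> M \<subseteq> U" "\<forall>v\<in>U. {v} \<in> A"
  shows "card (minimals A) = card U"
proof -
  have "minimals A = (\<lambda>v. {v}) ` U"
  proof
    show "minimals A \<subseteq> (\<lambda>v. {v}) ` U"
    proof
      fix M assume M: "M \<in> minimals A"
      have "M \<noteq> {}" using M assms by (auto simp: minimals_def)
      then obtain v where v: "v \<in> M" by blast
      have "v \<in> U" using M v assms by (auto simp: minimals_def)
      hence "{v} = M" using M v assms by (auto simp: minimals_def)
      thus "M \<in> (\<lambda>v. {v}) ` U" using \<open>v \<in> U\<close> by blast
    qed
  next
    show "(\<lambda>v. {v}) ` U \<subseteq> minimals A"
    proof
      fix M assume "M \<in> (\<lambda>v. {v}) ` U"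
      then obtain v where "v \<in> U" "M = {v}" by blast
      moreover have "\<forall>N\<in>A. N \<subseteq> {v} \<longrightarrow> N = {v}"
      proof (intro ballI impI)
        fix N assume N: "N \<in> A" "N \<subseteq> {v}"
        hence "N \<noteq> {}" using assms(1) by simp
        thus "N = {v}" using N(2) by (simp add: subset_singleton_iff)
      qed
      ultimately show "M \<in> minimals A" using assms(2) by (simp add: minimals_def)
    qed
  qed
  thus ?thesis by (simp add: card_image)
qed

lemma subcube_closed:
  assumes cc: "cubical_complex V C" and Csub: "C \<subseteq> cube_faces n" and G: "G \<in> C"
    and H: "H \<in> cube_faces n" "H \<subseteq> G"
  shows "H \<in> C"
proof -
  obtain p where p: "length p = n" "G = cube_face p" using G Csub by (auto simp: cube_faces_def)
  obtain m where iso: "poset_iso (faces_below C G) (cube_faces m)"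
    using cc G by (auto simp: cubical_complex_def)
  have GV: "G \<subseteq> V" using cc G by (auto simp: cubical_complex_def)
  have "card (minimals (faces_below C G)) = card G"
    apply (rule minimals_singletons)
    using cc GV by (auto simp: cubical_complex_def faces_below_def)
  moreover have "card (minimals (cube_faces m)) = card (cube_vertices m)"
  proof (rule minimals_singletons)
    show "\<forall>M\<in>cube_faces m. M \<noteq> {} \<and> M \<subseteq> cube_vertices m"
    proof
      fix M assume "M \<in> cube_faces m"
      then obtain q where q: "length q = m" "M = cube_face q" by (auto simp: cube_faces_def)
      have "card M = 2 ^ nNone q" using q card_cube_face by simp
      hence "M \<noteq> {}" by auto
      thus "M \<noteq> {} \<and> M \<subseteq> cube_vertices m" using q by (auto simp: cube_face_def cube_vertices_def)
    qed
    show "\<forall>v\<in>cube_vertices m. {v} \<in> cube_faces m"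
    proof
      fix v assume v: "v \<in> cube_vertices m"
      have "{v} = cube_face (map Some v)"
        using v by (auto simp: cube_face_def cube_vertices_def intro: nth_equalityI)
      thus "{v} \<in> cube_faces m" using v by (auto simp: cube_faces_def cube_vertices_def)
    qed
  qed
  ultimately have "card G = card (cube_vertices m)" using poset_iso_minimals[OF iso] by simp
  hence "2 ^ nNone p = (2::nat) ^ m" using p card_cube_face cube_vertices_eq by simp
  hence mp: "m = nNone p" by simp
  obtain f where "bij_betw f (faces_below C G) (cube_faces m)" using iso by (auto simp: poset_iso_def)
  hence "card (faces_below C G) = 3 ^ m" using bij_betw_same_card card_cube_faces by metis
  hence cardeq: "card (faces_below C G) = card {H \<in> cube_faces n. H \<subseteq> G}"
    using card_subcubes[OF p(1)] p mp by simp
  have "faces_below C G \<subseteq> {H \<in> cube_faces n. H \<subseteq> G}"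
    using Csub by (auto simp: faces_below_def)
  hence "faces_below C G = {H \<in> cube_faces n. H \<subseteq> G}"
    using card_subset_eq finite_subcubes[OF p(1)] cardeq p by metis
  thus ?thesis using H by (auto simp: faces_below_def)
qed



lemma structure_lemma:
  fixes \<psi> :: "bool list \<Rightarrow> bool list"
  assumes bij: "bij_betw \<psi> (cube_vertices m) VS"
    and len: "\<And>x. x \<in> VS \<Longrightarrow> length x = n"
    and edge: "\<And>u i. u \<in> cube_vertices m \<Longrightarrow> i < m \<Longrightarrow> \<exists>a<n. \<psi> (flip u i) = flip (\<psi> u) a"
  shows "\<exists>P. length P = n \<and> VS = cube_face P \<and> nNone P = m"
proof -
  have inj: "inj_on \<psi> (cube_vertices m)" and img: "\<psi> ` cube_vertices m = VS"
    using bij by (auto simp: bij_betw_def)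
  have lu: "length u = m" if "u \<in> cube_vertices m" for u using that by (simp add: cube_vertices_def)
  have cvflip: "flip u i \<in> cube_vertices m" if "u \<in> cube_vertices m" for u i
    using that by (simp add: cube_vertices_def)
  have lpsi: "length (\<psi> u) = n" if "u \<in> cube_vertices m" for u using that img len by blast
  define dir where "dir u i = (THE a. a < n \<and> \<psi> (flip u i) = flip (\<psi> u) a)" for u i
  have dir: "dir u i < n \<and> \<psi> (flip u i) = flip (\<psi> u) (dir u i)"
    if u: "u \<in> cube_vertices m" and i: "i < m" for u i
  proof -
    obtain a where a: "a < n" "\<psi> (flip u i) = flip (\<psi> u) a" using edge[OF u i] by blast
    have "(THE a. a < n \<and> \<psi> (flip u i) = flip (\<psi> u) a) = a"
    proof (rule the_equality)
      show "a < n \<and> \<psi> (flip u i) = flip (\<psi> u) a" using a by simp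
      fix b assume "b < n \<and> \<psi> (flip u i) = flip (\<psi> u) b"
      thus "b = a" using a flip_inj lpsi[OF u] by metis
    qed
    thus ?thesis using a by (simp add: dir_def)
  qed
  have flip_ne: "flip u i \<noteq> flip u j" if "u \<in> cube_vertices m" "i < m" "j < m" "i \<noteq> j" for u i j
    using flip_inj lu that by metis
  have dflip: "dir (flip u j) i = dir u i"
    if u: "u \<in> cube_vertices m" and i: "i < m" and j: "j < m" for u i j
  proof (cases "i = j")
    case True
    have ui: "flip u i \<in> cube_vertices m" using cvflip u by blast
    have "\<psi> u = \<psi> (flip (flip u i) i)" using lu[OF u] i by simp
    also have "\<dots> = flip (\<psi> (flip u i)) (dir (flip u i) i)" using dir[OF ui i] by simp
    also have "\<dots> = flip (flip (\<psi> u) (dir u i)) (dir (flip u i) i)" using dir[OF u i] by simp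
    finally have "dir (flip u i) i = dir u i"
      using flip_twice_eq[of "dir u i" "\<psi> u" "dir (flip u i) i"] dir[OF u i] dir[OF ui i] lpsi[OF u]
      by simp
    thus ?thesis using True by simp
  next
    case False
    have ui: "flip u i \<in> cube_vertices m" and uj: "flip u j \<in> cube_vertices m" using cvflip u by blast+
    define a where "a = dir u i"
    define b where "b = dir (flip u i) j"
    define c where "c = dir u j"
    define d where "d = dir (flip u j) i"
    have e1: "\<psi> (flip (flip u i) j) = flip (flip (\<psi> u) a) b"
      using dir[OF ui j] dir[OF u i] a_def b_def by simp
    have e2: "\<psi> (flip (flip u j) i) = flip (flip (\<psi> u) c) d"
      using dir[OF uj i] dir[OF u j] c_def d_def by simp
    have comm: "flip (flip u i) j = flip (flip u j) i" using flip_comm lu[OF u] i j by simp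
    have ab: "a \<noteq> b"
    proof
      assume "a = b"
      hence "\<psi> (flip (flip u i) j) = \<psi> u" using e1 dir[OF u i] lpsi[OF u] a_def by simp
      hence "flip (flip u i) j = u" using inj cvflip[OF ui] u by (auto simp: inj_on_def)
      hence "flip u i = flip u j" by (metis flip_flip length_flip lu[OF u] j)
      thus False using flip_ne u i j False by blast
    qed
    have ac: "a \<noteq> c"
    proof
      assume "a = c"
      hence "\<psi> (flip u i) = \<psi> (flip u j)" using dir[OF u i] dir[OF u j] a_def c_def by simp
      hence "flip u i = flip u j" using inj ui uj by (auto simp: inj_on_def)
      thus False using flip_ne u i j False by blast
    qed
    have "flip (flip (\<psi> u) a) b = flip (flip (\<psi> u) c) d" using e1 e2 comm by simp
    hence "d = a" using flip_square[of a "\<psi> u" b c d] ab ac lpsi[OF u]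
        dir[OF u i] dir[OF ui j] dir[OF u j] dir[OF uj i] a_def b_def c_def d_def by simp
    thus ?thesis using a_def d_def by simp
  qed
  define zeros where "zeros = replicate m False"
  have zcv: "zeros \<in> cube_vertices m" by (simp add: zeros_def cube_vertices_def)
  define uS where "uS S = map (\<lambda>i. i \<in> S) [0..<m]" for S :: "nat set"
  have uScv: "uS S \<in> cube_vertices m" for S by (simp add: uS_def cube_vertices_def)
  have uS0: "uS {} = zeros" by (simp add: uS_def zeros_def map_replicate_const)
  have uSins: "uS (insert s S) = flip (uS S) s" if "s < m" "s \<notin> S" for s S
    using that by (intro nth_equalityI) (auto simp: uS_def nth_flip)
  have dconst: "dir (uS S) i = dir zeros i" if "S \<subseteq> {..<m}" "i < m" for S i
  proof -
    have "finite S" using that finite_subset by blast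
    thus ?thesis using that(1)
    proof (induction S rule: finite_induct)
      case empty thus ?case using uS0 by simp
    next
      case (insert s S)
      hence "dir (uS (insert s S)) i = dir (flip (uS S) s) i" using uSins by simp
      also have "\<dots> = dir (uS S) i" using dflip uScv insert that(2) by auto
      finally show ?case using insert by simp
    qed
  qed
  have ueq: "u = uS {i. i < m \<and> u ! i}" if "u \<in> cube_vertices m" for u
    using lu[OF that] by (intro nth_equalityI) (auto simp: uS_def)
  define d where "d i = dir zeros i" for i
  have dall: "dir u i = d i" if "u \<in> cube_vertices m" "i < m" for u i
    using dconst[of "{i. i < m \<and> u ! i}" i] ueq[OF that(1)] that d_def by auto
  define z where "z = \<psi> zeros"
  have lz: "length z = n" using lpsi zcv z_def by simp
  have dlt: "d i < n" if "i < m" for i using dir[OF zcv that] d_def by simp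
  have dstep: "\<psi> (flip u i) = flip (\<psi> u) (d i)" if "u \<in> cube_vertices m" "i < m" for u i
    using dir[OF that] dall[OF that] by simp
  have dinj: "inj_on d {..<m}"
  proof (rule inj_onI, rule ccontr)
    fix i j assume i: "i \<in> {..<m}" and j: "j \<in> {..<m}" and eq: "d i = d j" and ne: "i \<noteq> j"
    have zi: "flip zeros i \<in> cube_vertices m" using cvflip zcv by blast
    have s1: "\<psi> (flip (flip zeros i) j) = flip (\<psi> (flip zeros i)) (d j)"
      using dstep[OF zi] j by blast
    have s2: "\<psi> (flip zeros i) = flip z (d i)"
      using dstep[OF zcv] i unfolding z_def by blast
    have "\<psi> (flip (flip zeros i) j) = flip (flip z (d i)) (d j)"
      using s1 s2 by simp
    also have "\<dots> = z" using eq flip_flip[of "d j" z] lz dlt[of j] j by simp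
    finally have "\<psi> (flip (flip zeros i) j) = \<psi> zeros" using z_def by simp
    hence "flip (flip zeros i) j = zeros" using inj cvflip[OF zi] zcv by (auto simp: inj_on_def)
    hence "flip (flip zeros i) j ! i = zeros ! i" by simp
    thus False using i j ne by (simp add: nth_flip zeros_def)
  qed
  have formula: "\<psi> (uS S) = map (\<lambda>j. z ! j \<noteq> (j \<in> d ` S)) [0..<n]" if "S \<subseteq> {..<m}" for S
  proof -
    have "finite S" using that finite_subset by blast
    thus ?thesis using that
    proof (induction S rule: finite_induct)
      case empty thus ?case using uS0 z_def lz by (intro nth_equalityI) auto
    next
      case (insert s S)
      have s: "s < m" using insert by auto
      have nds: "d s \<notin> d ` S" using dinj insert by (auto simp: inj_on_def)
      have "\<psi> (uS (insert s S)) = flip (\<psi> (uS S)) (d s)" using uSins[OF s insert(2)] dstep[OF uScv s] by simp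
      also have "\<dots> = flip (map (\<lambda>j. z ! j \<noteq> (j \<in> d ` S)) [0..<n]) (d s)" using insert by simp
      also have "\<dots> = map (\<lambda>j. z ! j \<noteq> (j \<in> d ` insert s S)) [0..<n]"
        using dlt[OF s] nds by (intro nth_equalityI) (auto simp: nth_flip)
      finally show ?case .
    qed
  qed
  define P where "P = map (\<lambda>j. if j \<in> d ` {..<m} then None else Some (z ! j)) [0..<n]"
  have "VS = cube_face P"
  proof
    show "VS \<subseteq> cube_face P"
    proof
      fix y assume "y \<in> VS"
      then obtain u where u: "u \<in> cube_vertices m" "y = \<psi> u" using img by blast
      define S where "S = {i. i < m \<and> u ! i}"
      have S: "S \<subseteq> {..<m}" by (auto simp: S_def)
      have "y = map (\<lambda>j. z ! j \<noteq> (j \<in> d ` S)) [0..<n]" using u ueq formula[OF S] S_def by metis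
      thus "y \<in> cube_face P" using S by (auto simp: cube_face_def P_def)
    qed
  next
    show "cube_face P \<subseteq> VS"
    proof
      fix y assume y: "y \<in> cube_face P"
      have ly: "length y = n" using y by (simp add: cube_face_def P_def)
      have yj: "y ! j = z ! j" if "j < n" "j \<notin> d ` {..<m}" for j
        using y that by (auto simp: cube_face_def P_def)
      define S where "S = {i. i < m \<and> y ! d i \<noteq> z ! d i}"
      have S: "S \<subseteq> {..<m}" by (auto simp: S_def)
      have "y = map (\<lambda>j. z ! j \<noteq> (j \<in> d ` S)) [0..<n]"
      proof (rule nth_equalityI)
        show "length y = length (map (\<lambda>j. z ! j \<noteq> (j \<in> d ` S)) [0..<n])" using ly by simp
        fix j assume "j < length y"
        hence j: "j < n" using ly by simp
        show "y ! j = map (\<lambda>j. z ! j \<noteq> (j \<in> d ` S)) [0..<n] ! j"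
        proof (cases "j \<in> d ` {..<m}")
          case True
          then obtain i where i: "i < m" "j = d i" by blast
          have "(j \<in> d ` S) = (i \<in> S)" using dinj S i by (auto simp: inj_on_def)
          thus ?thesis using i j by (auto simp: S_def)
        next
          case False
          hence "j \<notin> d ` S" using S by blast
          thus ?thesis using yj[OF j False] j by simp
        qed
      qed
      thus "y \<in> VS" using formula[OF S] img uScv by (metis imageI)
    qed
  qed
  moreover have "nNone P = m"
  proof -
    have "{i. i < length P \<and> P ! i = None} = d ` {..<m}"
      using dlt by (auto simp: P_def split: if_splits)
    hence "nNone P = card (d ` {..<m})" by (simp add: nNone_card)
    also have "\<dots> = m" using dinj by (simp add: card_image)
    finally show ?thesis .
  qed
  moreover have "length P = n" by (simp add: P_def)
  ultimately show ?thesis by blast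
qed



theorem mainTheorem3:
  fixes n k :: nat and V VS :: "bool list set" and C CS :: "bool list set set"
  assumes "subcomplex V C (cube_vertices n) (cube_faces n)"
    and "subcomplex VS CS V C"
    and "complex_iso VS CS (cube_vertices (k + 1)) (bd_cube_faces (k + 1))"
    and "k \<ge> 1"
  shows "face_like VS CS V C \<longleftrightarrow> (\<forall>F\<in>C. (VS, CS) \<noteq> (F, bd_faces_below C F))"
proof
  assume fl: "face_like VS CS V C"
  show "\<forall>F\<in>C. (VS, CS) \<noteq> (F, bd_faces_below C F)"
  proof (intro ballI notI)
    fix F assume F: "F \<in> C" and eq: "(VS, CS) = (F, bd_faces_below C F)"
    have "F \<noteq> {}" using assms(1) F by (auto simp: subcomplex_def cubical_complex_def)
    have "F \<inter> VS = {} \<or> F \<inter> VS \<in> CS" using fl F by (auto simp: face_like_def)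
    moreover have "F \<inter> VS = F" using eq by auto
    moreover have "F \<notin> CS" using eq by (simp add: bd_faces_below_def)
    ultimately show False using \<open>F \<noteq> {}\<close> by simp
  qed
next
  assume H: "\<forall>F\<in>C. (VS, CS) \<noteq> (F, bd_faces_below C F)"
  define m where "m = k + 1"
  have m2: "m \<ge> 2" using assms(4) m_def by simp
  have VV: "V \<subseteq> cube_vertices n" and Csub: "C \<subseteq> cube_faces n" and ccC: "cubical_complex V C"
    using assms(1) by (auto simp: subcomplex_def)
  have VSV: "VS \<subseteq> V" and CSC: "CS \<subseteq> C" and ccS: "cubical_complex VS CS"
    using assms(2) by (auto simp: subcomplex_def)
  obtain \<phi> where phi: "bij_betw \<phi> VS (cube_vertices m)"
    and phiF: "\<And>F. F \<subseteq> VS \<Longrightarrow> (F \<in> CS \<longleftrightarrow> \<phi> ` F \<in> bd_cube_faces m)"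
    using assms(3) m_def by (auto simp: complex_iso_def)
  define \<psi> where "\<psi> = inv_into VS \<phi>"
  have psi: "bij_betw \<psi> (cube_vertices m) VS" using bij_betw_inv_into phi \<psi>_def by blast
  have phipsi: "\<phi> (\<psi> u) = u" if "u \<in> cube_vertices m" for u
    using bij_betw_inv_into_right[OF phi that] \<psi>_def by simp
  have lenVS: "length x = n" if "x \<in> VS" for x using that VSV VV by (auto simp: cube_vertices_def)
  have CSsub: "CS \<subseteq> cube_faces n" using CSC Csub by blast
  have CSVS: "F \<subseteq> VS" if "F \<in> CS" for F using ccS that by (auto simp: cubical_complex_def)
  have imgimg: "\<phi> ` (\<psi> ` B) = B" if "B \<subseteq> cube_vertices m" for B
  proof -
    have "\<phi> ` (\<psi> ` B) = (\<lambda>x. \<phi> (\<psi> x)) ` B" by (simp add: image_image)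
    also have "\<dots> = (\<lambda>x. x) ` B" using that phipsi by (intro image_cong) auto
    finally show ?thesis by simp
  qed
  have psiB: "\<psi> ` B \<subseteq> VS" if "B \<subseteq> cube_vertices m" for B
    using psi that by (auto simp: bij_betw_def)
  have bd_sub: "B \<subseteq> cube_vertices m" if "B \<in> bd_cube_faces m" for B
    using that by (auto simp: bd_cube_faces_def cube_faces_def cube_face_def cube_vertices_def)
  have inCS: "\<psi> ` B \<in> CS" if "B \<in> bd_cube_faces m" for B
    using phiF[OF psiB[OF bd_sub[OF that]]] imgimg[OF bd_sub[OF that]] that by simp
  have injpsi: "inj_on \<psi> (cube_vertices m)" using psi by (simp add: bij_betw_def)
  have cvflip: "flip u i \<in> cube_vertices m" if "u \<in> cube_vertices m" for u i
    using that by (simp add: cube_vertices_def)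
  have edge: "\<exists>a<n. \<psi> (flip u i) = flip (\<psi> u) a" if u: "u \<in> cube_vertices m" and i: "i < m" for u i
  proof -
    have lu: "length u = m" using u by (simp add: cube_vertices_def)
    define E where "E = {u, flip u i}"
    have Eeq: "E = cube_face ((map Some u)[i := None])"
    proof (rule set_eqI)
      fix x
      show "x \<in> E \<longleftrightarrow> x \<in> cube_face ((map Some u)[i := None])"
      proof
        assume "x \<in> E"
        thus "x \<in> cube_face ((map Some u)[i := None])"
          using lu i by (auto simp: E_def cube_face_def nth_list_update nth_flip)
      next
        assume x: "x \<in> cube_face ((map Some u)[i := None])"
        have lx: "length x = m" using x lu by (simp add: cube_face_def)
        have xj: "x ! j = u ! j" if "j < m" "j \<noteq> i" for j
          using x that lu by (auto simp: cube_face_def nth_list_update)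
        show "x \<in> E"
        proof (cases "x ! i = u ! i")
          case True
          hence "x = u" using xj lx lu by (intro nth_equalityI) (simp, metis)
          thus ?thesis by (simp add: E_def)
        next
          case False
          hence "x = flip u i" using xj lx lu i by (intro nth_equalityI) (auto simp: nth_flip)
          thus ?thesis by (simp add: E_def)
        qed
      qed
    qed
    have Ecf: "E \<in> cube_faces m" using Eeq lu by (simp add: cube_faces_def)
    define j :: nat where "j = (if i = 0 then 1 else 0)"
    have j: "j < m" "j \<noteq> i" using m2 by (auto simp: j_def)
    have "flip u j \<notin> E" using flip_neq[of j u] flip_inj[of j u i] j i lu by (auto simp: E_def)
    moreover have "flip u j \<in> cube_face (replicate m None)" using cvflip[OF u] cube_vertices_eq by simp
    ultimately have "E \<noteq> cube_face (replicate m None)" by blast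
    hence Ebd: "E \<in> bd_cube_faces m" using Ecf by (simp add: bd_cube_faces_def)
    have F: "\<psi> ` E \<in> cube_faces n" using inCS[OF Ebd] CSsub by blast
    then obtain q where q: "length q = n" "cube_face q = \<psi> ` E" by (auto simp: cube_faces_def)
    have "\<psi> u \<noteq> \<psi> (flip u i)" using injpsi u cvflip[OF u] flip_neq[of i u] lu i
      by (auto simp: inj_on_def)
    moreover have "cube_face q = {\<psi> u, \<psi> (flip u i)}" using q by (simp add: E_def)
    ultimately show ?thesis using two_point q by metis
  qed
  obtain P where P: "length P = n" "VS = cube_face P" "nNone P = m"
    using structure_lemma[OF psi lenVS edge] by blast
  define PS where "PS = {H \<in> cube_faces n. H \<subseteq> VS} - {VS}"
  have VSin: "VS \<in> {H \<in> cube_faces n. H \<subseteq> VS}" using P by (auto simp: cube_faces_def)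
  have finPS: "finite PS" using finite_subcubes[OF P(1)] P(2) by (simp add: PS_def)
  have cardPS: "card PS = 3 ^ m - 1"
    using card_Diff_singleton[OF VSin] card_subcubes[OF P(1)] P(2,3) finite_subcubes[OF P(1)]
    by (simp add: PS_def)
  have "\<phi> ` VS = cube_vertices m" using phi by (simp add: bij_betw_def)
  hence VSnot: "VS \<notin> CS" using phiF[of VS] cube_vertices_eq by (simp add: bd_cube_faces_def)
  have CSPS: "CS \<subseteq> PS" using CSsub CSVS VSnot by (auto simp: PS_def)
  have injphi: "inj_on \<phi> VS" using phi by (simp add: bij_betw_def)
  have bijCS: "bij_betw ((`) \<phi>) CS (bd_cube_faces m)"
  proof (rule bij_betw_imageI)
    show "inj_on ((`) \<phi>) CS"
    proof (rule inj_onI)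
      fix F G assume "F \<in> CS" "G \<in> CS" "\<phi> ` F = \<phi> ` G"
      thus "F = G" using inj_on_image_eq_iff[OF injphi] CSVS by metis
    qed
    show "(`) \<phi> ` CS = bd_cube_faces m"
    proof
      show "(`) \<phi> ` CS \<subseteq> bd_cube_faces m" using phiF CSVS by blast
      show "bd_cube_faces m \<subseteq> (`) \<phi> ` CS"
      proof
        fix B assume B: "B \<in> bd_cube_faces m"
        have "B = \<phi> ` (\<psi> ` B)" using imgimg[OF bd_sub[OF B]] by simp
        thus "B \<in> (`) \<phi> ` CS" using inCS[OF B] by blast
      qed
    qed
  qed
  have "card (bd_cube_faces m) = 3 ^ m - 1"
    using card_Diff_singleton[OF top_in_cube_faces] card_cube_faces finite_cube_faces
    by (simp add: bd_cube_faces_def)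
  hence "card CS = card PS" using bij_betw_same_card[OF bijCS] cardPS by simp
  hence CSeq: "CS = PS" using card_subset_eq[OF finPS CSPS] by simp
  show "face_like VS CS V C" unfolding face_like_def
  proof (intro conjI ballI)
    show "subcomplex VS CS V C" by (rule assms(2))
    fix G assume G: "G \<in> C"
    obtain q where q: "length q = n" "G = cube_face q" using G Csub by (auto simp: cube_faces_def)
    show "G \<inter> VS = {} \<or> G \<inter> VS \<in> CS"
    proof (cases "G \<inter> VS = {}")
      case True thus ?thesis by simp
    next
      case False
      then obtain x where x: "x \<in> cube_face q \<inter> cube_face P" using q P by blast
      define r where "r = map (\<lambda>i. if q ! i = None then P ! i else q ! i) [0..<n]"
      have "G \<inter> VS = cube_face r"
        using cube_face_inter[of q P r x] q P x by (simp add: r_def)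
      hence GVScf: "G \<inter> VS \<in> cube_faces n" by (simp add: cube_faces_def r_def)
      show ?thesis
      proof (cases "G \<inter> VS = VS")
        case False
        hence "G \<inter> VS \<in> PS" using GVScf by (auto simp: PS_def)
        thus ?thesis using CSeq by simp
      next
        case True
        hence "VS \<subseteq> G" by blast
        hence VSC: "VS \<in> C" using subcube_closed[OF ccC Csub G] VSin by blast
        have "bd_faces_below C VS = PS"
          using Csub CSeq CSC by (auto simp: bd_faces_below_def faces_below_def PS_def)
        thus ?thesis using H VSC CSeq by auto
      qed
    qed
  qed
qed


end
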